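(* Every Kan fibration of simplicial sets is a Skvortsov–Shehtman fibration; in particular, every Kan complex is a Skvortsov–Shehtman complex.
   Context: For $n>1$ and $0\le p<q\le n$, the $(p,q)$-th rhombus $R_{p,q}[n]\subseteq\Delta[n]$ is the union of the $p$-th and $q$-th faces of the standard simplex $\Delta[n]$. A simplicial map $f:E\to B$ is a Skvortsov–Shehtman fibration if for all $n>1$, $0\le p<q\le n$, every commutative square with top map $R_{p,q}[n]\to E$, left map the inclusion $R_{p,q}[n]\hookrightarrow\Delta[n]$, right map $f$ and bottom map $\Delta[n]\to B$ admits a diagonal filler $\Delta[n]\to E$ making both triangles commute. A simplicial set $S$ is a Skvortsov–Shehtman complex if $S\to *$ is a Skvortsov–Shehtman fibration. Kan fibrations are maps with the right lifting property against all horn inclusions $\Lambda_p[n]\hookrightarrow\Delta[n]$, $n>0$, $0\le p\le n$. *)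

theory Defs
  imports Main
begin

text \<open>An operator
  theta : [m] -> [k] is a monotone map {0..m} -> {0..k}, represented by a
  function nat => nat (only its values on {0..m} matter).\<close>

record 'a sset =
  simp :: "nat \<Rightarrow> 'a set"
  act  :: "nat \<Rightarrow> nat \<Rightarrow> (nat \<Rightarrow> nat) \<Rightarrow> 'a \<Rightarrow> 'a"

definition is_op :: "nat \<Rightarrow> nat \<Rightarrow> (nat \<Rightarrow> nat) \<Rightarrow> bool" where
  "is_op m k \<theta> \<longleftrightarrow> (\<forall>i j. i \<le> j \<and> j \<le> m \<longrightarrow> \<theta> i \<le> \<theta> j) \<and> (\<forall>i\<le>m. \<theta> i \<le> k)"

definition is_sset :: "'a sset \<Rightarrow> bool" where
  "is_sset X \<longleftrightarrow>
     (\<forall>m k \<theta> x. is_op m k \<theta> \<and> x \<in> simp X k \<longrightarrow> act X m k \<theta> x \<in> simp X m) \<and>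
     (\<forall>m k \<theta> \<theta>' x. is_op m k \<theta> \<and> (\<forall>i\<le>m. \<theta> i = \<theta>' i) \<and> x \<in> simp X k
         \<longrightarrow> act X m k \<theta>' x = act X m k \<theta> x) \<and>
     (\<forall>n x. x \<in> simp X n \<longrightarrow> act X n n id x = x) \<and>
     (\<forall>l m k \<phi> \<theta> x. is_op l m \<phi> \<and> is_op m k \<theta> \<and> x \<in> simp X k
         \<longrightarrow> act X l m \<phi> (act X m k \<theta> x) = act X l k (\<theta> \<circ> \<phi>) x)"

definition smap :: "'a sset \<Rightarrow> 'b sset \<Rightarrow> (nat \<Rightarrow> 'a \<Rightarrow> 'b) \<Rightarrow> bool" where
  "smap X Y f \<longleftrightarrow>
     (\<forall>n x. x \<in> simp X n \<longrightarrow> f n x \<in> simp Y n) \<and>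
     (\<forall>m k \<theta> x. is_op m k \<theta> \<and> x \<in> simp X k \<longrightarrow> f m (act X m k \<theta> x) = act Y m k \<theta> (f k x))"

text \<open>The standard simplex Delta[n]: its m-simplices are the monotone maps
  [m] -> [n], written as the list of their values.\<close>
definition std_act :: "nat \<Rightarrow> nat \<Rightarrow> (nat \<Rightarrow> nat) \<Rightarrow> nat list \<Rightarrow> nat list" where
  "std_act m k \<theta> \<sigma> = map (\<lambda>i. \<sigma> ! \<theta> i) [0..<Suc m]"

definition Delta :: "nat \<Rightarrow> nat list sset" where
  "Delta n = \<lparr> simp = (\<lambda>m. {\<sigma>. length \<sigma> = Suc m \<and> sorted \<sigma> \<and> (\<forall>x\<in>set \<sigma>. x \<le> n)}),
              act = std_act \<rparr>"

definition sub_Delta :: "nat \<Rightarrow> (nat list \<Rightarrow> bool) \<Rightarrow> nat list sset" where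
  "sub_Delta n P = \<lparr> simp = (\<lambda>m. {\<sigma> \<in> simp (Delta n) m. P \<sigma>}), act = std_act \<rparr>"

text \<open>The p-th face of Delta[n] consists of the simplices missing the vertex p.
  Horn Lambda_p[n]: union of the faces i, i /= p.
  Rhombus R_{p,q}[n]: union of the p-th and q-th faces.\<close>
definition horn :: "nat \<Rightarrow> nat \<Rightarrow> nat list sset" where
  "horn n p = sub_Delta n (\<lambda>\<sigma>. \<exists>i\<le>n. i \<noteq> p \<and> i \<notin> set \<sigma>)"

definition rhombus :: "nat \<Rightarrow> nat \<Rightarrow> nat \<Rightarrow> nat list sset" where
  "rhombus n p q = sub_Delta n (\<lambda>\<sigma>. p \<notin> set \<sigma> \<or> q \<notin> set \<sigma>)"

definition lifts_against :: "nat \<Rightarrow> nat list sset \<Rightarrow> 'a sset \<Rightarrow> 'b sset \<Rightarrow> (nat \<Rightarrow> 'a \<Rightarrow> 'b) \<Rightarrow> bool" where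
  "lifts_against n A E B f \<longleftrightarrow>
     (\<forall>g b. smap A E g \<and> smap (Delta n) B b \<and>
            (\<forall>m. \<forall>\<sigma>\<in>simp A m. f m (g m \<sigma>) = b m \<sigma>) \<longrightarrow>
        (\<exists>h. smap (Delta n) E h \<and>
             (\<forall>m. \<forall>\<sigma>\<in>simp A m. h m \<sigma> = g m \<sigma>) \<and>
             (\<forall>m. \<forall>\<sigma>\<in>simp (Delta n) m. f m (h m \<sigma>) = b m \<sigma>)))"

definition kan_fibration :: "'a sset \<Rightarrow> 'b sset \<Rightarrow> (nat \<Rightarrow> 'a \<Rightarrow> 'b) \<Rightarrow> bool" where
  "kan_fibration E B f \<longleftrightarrow> (\<forall>n p. 0 < n \<and> p \<le> n \<longrightarrow> lifts_against n (horn n p) E B f)"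

definition ss_fibration :: "'a sset \<Rightarrow> 'b sset \<Rightarrow> (nat \<Rightarrow> 'a \<Rightarrow> 'b) \<Rightarrow> bool" where
  "ss_fibration E B f \<longleftrightarrow> (\<forall>n p q. 1 < n \<and> p < q \<and> q \<le> n \<longrightarrow> lifts_against n (rhombus n p q) E B f)"

definition terminal :: "unit sset" where
  "terminal = \<lparr> simp = (\<lambda>n. {()}), act = (\<lambda>m k \<theta> x. ()) \<rparr>"

definition to_terminal :: "nat \<Rightarrow> 'a \<Rightarrow> unit" where
  "to_terminal n x = ()"

definition kan_complex :: "'a sset \<Rightarrow> bool" where
  "kan_complex S \<longleftrightarrow> kan_fibration S terminal to_terminal"

definition ss_complex :: "'a sset \<Rightarrow> bool" where
  "ss_complex S \<longleftrightarrow> ss_fibration S terminal to_terminal"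

end

theory Submission imports Defs begin

definition U :: "nat \<Rightarrow> nat set \<Rightarrow> nat list sset" where
  "U n F = sub_Delta n (\<lambda>\<sigma>. \<exists>j\<in>F. j \<notin> set \<sigma>)"

definition cof :: "nat \<Rightarrow> nat \<Rightarrow> nat" where "cof i j = (if j < i then j else Suc j)"
definition cod :: "nat \<Rightarrow> nat \<Rightarrow> nat" where "cod i j = (if j < i then j else j - 1)"

lemma simp_Delta: "simp (Delta n) m = {\<sigma>. length \<sigma> = Suc m \<and> sorted \<sigma> \<and> (\<forall>x\<in>set \<sigma>. x \<le> n)}"
  by (simp add: Delta_def)
lemma act_Delta: "act (Delta n) = std_act" by (simp add: Delta_def)
lemma simp_U: "simp (U n F) m = {\<sigma>. length \<sigma> = Suc m \<and> sorted \<sigma> \<and> (\<forall>x\<in>set \<sigma>. x \<le> n) \<and> (\<exists>j\<in>F. j \<notin> set \<sigma>)}"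
  by (simp add: U_def sub_Delta_def Delta_def)
lemma act_U: "act (U n F) = std_act" by (simp add: U_def sub_Delta_def)

lemma std_len[simp]: "length (std_act m k \<theta> \<sigma>) = Suc m"
  by (simp add: std_act_def)

lemma std_set: assumes "is_op m k \<theta>" "length \<sigma> = Suc k"
  shows "set (std_act m k \<theta> \<sigma>) \<subseteq> set \<sigma>"
  using assms by (auto simp: std_act_def is_op_def less_Suc_eq_le)

lemma std_sorted: assumes "is_op m k \<theta>" "length \<sigma> = Suc k" "sorted \<sigma>"
  shows "sorted (std_act m k \<theta> \<sigma>)"
proof -
  have "std_act m k \<theta> \<sigma> ! a \<le> std_act m k \<theta> \<sigma> ! b" if "a \<le> b" "b < Suc m" for a b
  proof -
    have "\<theta> a \<le> \<theta> b" "\<theta> b \<le> k" using assms(1) that by (auto simp: is_op_def)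
    then have "\<sigma> ! \<theta> a \<le> \<sigma> ! \<theta> b" using assms(2,3) by (simp add: sorted_iff_nth_mono)
    then show ?thesis using that by (simp add: std_act_def nth_map_upt del: upt_Suc)
  qed
  then show ?thesis by (simp add: sorted_iff_nth_mono)
qed

lemma std_map: assumes "is_op m k \<theta>" "length \<sigma> = Suc k"
  shows "map u (std_act m k \<theta> \<sigma>) = std_act m k \<theta> (map u \<sigma>)"
  using assms by (auto simp: std_act_def is_op_def less_Suc_eq_le)

lemma smap_comp: "smap X Y u \<Longrightarrow> smap Y Z v \<Longrightarrow> smap X Z (\<lambda>m x. v m (u m x))"
  unfolding smap_def by auto

lemma cod_cof[simp]: "cod i (cof i j) = j" by (simp add: cod_def cof_def)
lemma cof_cod: "j \<noteq> i \<Longrightarrow> cof i (cod i j) = j" by (auto simp: cod_def cof_def)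
lemma mono_cof: "mono (cof i)" by (auto simp: mono_def cof_def)
lemma mono_cod: "mono (cod i)" by (auto simp: mono_def cod_def)
lemma inj_cof: "inj (cof i)" by (metis cod_cof injI)

lemma map_cod_cof[simp]: "map (cod i) (map (cof i) \<tau>) = \<tau>" by (induct \<tau>) auto
lemma map_cof_cod: "i \<notin> set \<sigma> \<Longrightarrow> map (cof i) (map (cod i) \<sigma>) = \<sigma>"
  by (induct \<sigma>) (auto simp: cof_cod)

lemma cof_le: "i \<le> n \<Longrightarrow> x \<le> n - 1 \<Longrightarrow> 0 < n \<Longrightarrow> cof i x \<le> n"
  by (auto simp: cof_def)

lemma smap_cofD: assumes "i \<le> n" "0 < n"
  shows "smap (Delta (n-1)) (Delta n) (\<lambda>m \<tau>. map (cof i) \<tau>)"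
  unfolding smap_def simp_Delta act_Delta
  using assms by (auto simp: cof_le sorted_map mono_cof std_map
       intro: sorted_wrt_mono_rel[of _ "(\<le>)"] monoD[OF mono_cof])

lemma smap_cofU: assumes "i \<le> n" "0 < n"
  shows "smap (U (n-1) {j. j < n \<and> cof i j \<in> F}) (U n F) (\<lambda>m \<tau>. map (cof i) \<tau>)"
proof -
  have "\<exists>j\<in>F. j \<notin> cof i ` set \<tau>" if "\<exists>j\<in>{j. j < n \<and> cof i j \<in> F}. j \<notin> set \<tau>" for \<tau>
    using that by (metis (no_types, lifting) inj_image_mem_iff[OF inj_cof] mem_Collect_eq)
  then show ?thesis using smap_cofD[OF assms]
    unfolding smap_def simp_Delta act_Delta simp_U act_U by auto
qed

lemma std_in_Delta: "is_op m k \<theta> \<Longrightarrow> \<sigma> \<in> simp (Delta n) k \<Longrightarrow> std_act m k \<theta> \<sigma> \<in> simp (Delta n) m"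
  unfolding simp_Delta using std_set std_sorted by fastforce

lemma step:
  assumes IH: "lifts_against (n-1) (U (n-1) {j. j < n \<and> cof i j \<in> F}) E B f"
    and ext: "lifts_against n (U n (insert i F)) E B f"
    and i: "i \<le> n" "i \<notin> F" and n: "0 < n" and Fn: "F \<subseteq> {..n}"
  shows "lifts_against n (U n F) E B f"
  unfolding lifts_against_def
proof (intro allI impI)
  fix g b
  assume A: "smap (U n F) E g \<and> smap (Delta n) B b \<and> (\<forall>m. \<forall>\<sigma>\<in>simp (U n F) m. f m (g m \<sigma>) = b m \<sigma>)"
  define F' where "F' = {j. j < n \<and> cof i j \<in> F}"
  define g' where "g' m \<tau> = g m (map (cof i) \<tau>)" for m \<tau>
  define b' where "b' m \<tau> = b m (map (cof i) \<tau>)" for m \<tau>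
  have g': "smap (U (n-1) F') E g'" unfolding g'_def F'_def
    using smap_comp[OF smap_cofU[OF i(1) n] ] A by blast
  have b': "smap (Delta (n-1)) B b'" unfolding b'_def
    using smap_comp[OF smap_cofD[OF i(1) n] ] A by blast
  have fg': "\<forall>m. \<forall>\<tau>\<in>simp (U (n-1) F') m. f m (g' m \<tau>) = b' m \<tau>"
    using A smap_cofU[OF i(1) n] unfolding g'_def b'_def F'_def smap_def by blast
  obtain k where k: "smap (Delta (n-1)) E k" "\<forall>m. \<forall>\<tau>\<in>simp (U (n-1) F') m. k m \<tau> = g' m \<tau>"
    "\<forall>m. \<forall>\<tau>\<in>simp (Delta (n-1)) m. f m (k m \<tau>) = b' m \<tau>"
    using IH g' b' fg' unfolding lifts_against_def F'_def by blast
  define P where "P \<sigma> = (\<exists>j\<in>F. j \<notin> set \<sigma>)" for \<sigma>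
  define G where "G m \<sigma> = (if P \<sigma> then g m \<sigma> else k m (map (cod i) \<sigma>))" for m \<sigma>
  have codD: "map (cod i) \<sigma> \<in> simp (Delta (n-1)) m" if "\<sigma> \<in> simp (Delta n) m" "i \<notin> set \<sigma>" for \<sigma> m
  proof -
    have "\<forall>x\<in>set \<sigma>. cod i x \<le> n - 1" using that i by (auto simp: simp_Delta cod_def)
    moreover have "sorted (map (cod i) \<sigma>)" using that
      by (auto simp: simp_Delta sorted_map intro: sorted_wrt_mono_rel[of _ "(\<le>)"] monoD[OF mono_cod])
    ultimately show ?thesis using that by (simp add: simp_Delta)
  qed
  have UF: "simp (U n F) m = {\<sigma> \<in> simp (Delta n) m. P \<sigma>}" for m
    by (auto simp: simp_U simp_Delta P_def)
  have UiF: "simp (U n (insert i F)) m = {\<sigma> \<in> simp (Delta n) m. P \<sigma> \<or> i \<notin> set \<sigma>}" for m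
    by (auto simp: simp_U simp_Delta P_def)
  have agree: "g m \<sigma> = k m (map (cod i) \<sigma>)" if t1: "\<sigma> \<in> simp (Delta n) m" and t2: "P \<sigma>" and t3: "i \<notin> set \<sigma>" for m \<sigma>
  proof -
    have "map (cod i) \<sigma> \<in> simp (U (n-1) F') m"
    proof -
      obtain j where j: "j \<in> F" "j \<notin> set \<sigma>" using t2 P_def by auto
      have "j \<le> n" "j \<noteq> i" using j Fn i by auto
      have "cod i j < n" using \<open>j \<le> n\<close> \<open>j \<noteq> i\<close> i by (auto simp: cod_def)
      then have "cod i j \<in> F'" unfolding F'_def using j(1) cof_cod[OF \<open>j \<noteq> i\<close>] by simp
      moreover have "cod i j \<notin> set (map (cod i) \<sigma>)"
      proof
        assume "cod i j \<in> set (map (cod i) \<sigma>)"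
        then obtain x where x: "x \<in> set \<sigma>" "cod i x = cod i j" by auto
        then have "x \<noteq> i" using t3 by auto
        then have "x = j" using x cof_cod \<open>j \<noteq> i\<close> by metis
        then show False using x j by simp
      qed
      ultimately show ?thesis using codD[OF t1 t3] by (auto simp: simp_U simp_Delta)
    qed
    then show ?thesis using k(2) map_cof_cod[OF t3] unfolding g'_def by metis
  qed
  have GE: "smap (U n (insert i F)) E G"
    unfolding smap_def
  proof (intro conjI allI impI)
    fix m \<sigma> assume s: "\<sigma> \<in> simp (U n (insert i F)) m"
    show "G m \<sigma> \<in> simp E m"
    proof (cases "P \<sigma>")
      case True then show ?thesis using A s UF UiF by (simp add: G_def smap_def)
    next
      case False
      then have "i \<notin> set \<sigma>" "\<sigma> \<in> simp (Delta n) m" using s UiF by auto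
      then show ?thesis using k(1) codD False unfolding G_def smap_def by simp
    qed
  next
    fix m k0 \<theta> \<sigma> assume a: "is_op m k0 \<theta> \<and> \<sigma> \<in> simp (U n (insert i F)) k0"
    define \<tau> where "\<tau> = std_act m k0 \<theta> \<sigma>"
    have sD: "\<sigma> \<in> simp (Delta n) k0" using a UiF by auto
    have tD: "\<tau> \<in> simp (Delta n) m" using std_in_Delta a sD \<tau>_def by blast
    have sub: "set \<tau> \<subseteq> set \<sigma>" using std_set a sD \<tau>_def by (auto simp: simp_Delta)
    have actU: "act (U n (insert i F)) m k0 \<theta> \<sigma> = \<tau>" by (simp add: act_U \<tau>_def)
    show "G m (act (U n (insert i F)) m k0 \<theta> \<sigma>) = act E m k0 \<theta> (G k0 \<sigma>)"
      unfolding actU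
    proof (cases "P \<sigma>")
      case True
      then have "P \<tau>" using sub P_def by blast
      then show "G m \<tau> = act E m k0 \<theta> (G k0 \<sigma>)"
        using True A a sD UF unfolding G_def smap_def by (simp add: act_U \<tau>_def)
    next
      case False
      then have i\<sigma>: "i \<notin> set \<sigma>" using a UiF by auto
      then have i\<tau>: "i \<notin> set \<tau>" using sub by blast
      have "act E m k0 \<theta> (G k0 \<sigma>) = act E m k0 \<theta> (k k0 (map (cod i) \<sigma>))"
        using False by (simp add: G_def)
      also have "\<dots> = k m (std_act m k0 \<theta> (map (cod i) \<sigma>))"
        using k(1) codD[OF sD i\<sigma>] a unfolding smap_def act_Delta by metis
      also have "\<dots> = k m (map (cod i) \<tau>)"
        using std_map[of m k0 \<theta> \<sigma> "cod i"] a sD by (simp add: \<tau>_def simp_Delta)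
      also have "\<dots> = G m \<tau>"
        using agree[OF tD _ i\<tau>] by (simp add: G_def)
      finally show "G m \<tau> = act E m k0 \<theta> (G k0 \<sigma>)" by simp
    qed
  qed
  have fG: "\<forall>m. \<forall>\<sigma>\<in>simp (U n (insert i F)) m. f m (G m \<sigma>) = b m \<sigma>"
  proof (intro allI ballI)
    fix m \<sigma> assume s: "\<sigma> \<in> simp (U n (insert i F)) m"
    show "f m (G m \<sigma>) = b m \<sigma>"
    proof (cases "P \<sigma>")
      case True then show ?thesis using A s UF UiF by (simp add: G_def)
    next
      case False
      then have "i \<notin> set \<sigma>" "\<sigma> \<in> simp (Delta n) m" using s UiF by auto
      then have "f m (k m (map (cod i) \<sigma>)) = b' m (map (cod i) \<sigma>)" using k(3) codD by blast
      then show ?thesis using False map_cof_cod[OF \<open>i \<notin> set \<sigma>\<close>] by (simp add: G_def b'_def)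
    qed
  qed
  obtain h where h: "smap (Delta n) E h" "\<forall>m. \<forall>\<sigma>\<in>simp (U n (insert i F)) m. h m \<sigma> = G m \<sigma>"
     "\<forall>m. \<forall>\<sigma>\<in>simp (Delta n) m. f m (h m \<sigma>) = b m \<sigma>"
    using ext GE fG A unfolding lifts_against_def by blast
  show "\<exists>h. smap (Delta n) E h \<and> (\<forall>m. \<forall>\<sigma>\<in>simp (U n F) m. h m \<sigma> = g m \<sigma>) \<and>
             (\<forall>m. \<forall>\<sigma>\<in>simp (Delta n) m. f m (h m \<sigma>) = b m \<sigma>)"
    using h UF UiF by (intro exI[of _ h]) (auto simp: G_def)
qed

lemma card_F': assumes "F \<subseteq> {..n}" "i \<notin> F" "i \<le> n"
  shows "card {j. j < n \<and> cof i j \<in> F} = card F"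
proof -
  have "cof i ` {j. j < n \<and> cof i j \<in> F} = F"
  proof
    show "cof i ` {j. j < n \<and> cof i j \<in> F} \<subseteq> F" by auto
    show "F \<subseteq> cof i ` {j. j < n \<and> cof i j \<in> F}"
    proof
      fix x assume x: "x \<in> F"
      then have "x \<noteq> i" "x \<le> n" using assms by auto
      then have "cod i x < n" "cof i (cod i x) = x" using assms(3) by (auto simp: cod_def cof_def)
      then show "x \<in> cof i ` {j. j < n \<and> cof i j \<in> F}" using x by (metis (mono_tags, lifting) image_eqI mem_Collect_eq)
    qed
  qed
  then show ?thesis using card_image[OF inj_on_subset[OF inj_cof subset_UNIV]] by metis
qed

lemma main:
  assumes kan: "kan_fibration E B f"
  shows "F \<subseteq> {..n} \<Longrightarrow> 2 \<le> card F \<Longrightarrow> card F \<le> n \<Longrightarrow> lifts_against n (U n F) E B f"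
proof (induction n arbitrary: F rule: less_induct)
  case (less n)
  have "\<forall>F. F \<subseteq> {..n} \<and> 2 \<le> card F \<and> card F \<le> n \<and> n - card F = d \<longrightarrow> lifts_against n (U n F) E B f" for d
  proof (induction d)
    case 0
    show ?case
    proof (intro allI impI)
      fix F assume F: "F \<subseteq> {..n} \<and> 2 \<le> card F \<and> card F \<le> n \<and> n - card F = 0"
      then have cF: "card F = n" by simp
      have "F \<noteq> {..n}" using cF by (metis card_atMost n_not_Suc_n)
      then obtain r where r: "r \<le> n" "r \<notin> F" using F by auto
      have "F \<subseteq> {..n} - {r}" using F r by auto
      moreover have "card ({..n} - {r}) = n" using r by simp
      ultimately have FF: "F = {..n} - {r}" using cF by (metis card_subset_eq finite_Diff finite_atMost)
      have "U n F = horn n r" unfolding U_def horn_def FF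
        by (rule arg_cong[where f="sub_Delta n"]) auto
      moreover have "0 < n" using F by auto
      ultimately show "lifts_against n (U n F) E B f" using kan r unfolding kan_fibration_def by simp
    qed
  next
    case (Suc d)
    show ?case
    proof (intro allI impI)
      fix F assume F: "F \<subseteq> {..n} \<and> 2 \<le> card F \<and> card F \<le> n \<and> n - card F = Suc d"
      have fin: "finite F" using F finite_subset by blast
      have "F \<noteq> {..n}" using F by (metis card_atMost not_less_eq_eq order_refl)
      then obtain i where i: "i \<le> n" "i \<notin> F" using F by auto
      have ci: "card (insert i F) = Suc (card F)" using fin i by simp
      have ext: "lifts_against n (U n (insert i F)) E B f"
      proof -
        have "insert i F \<subseteq> {..n}" "2 \<le> card (insert i F)" "card (insert i F) \<le> n"
             "n - card (insert i F) = d" using F i ci by auto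
        then show ?thesis using Suc.IH by blast
      qed
      have n: "0 < n" using F by auto
      have IH: "lifts_against (n-1) (U (n-1) {j. j < n \<and> cof i j \<in> F}) E B f"
      proof -
        have "{j. j < n \<and> cof i j \<in> F} \<subseteq> {..n - 1}" using n by auto
        moreover have "card F \<le> n - 1" using F by auto
        ultimately show ?thesis
          using less.IH[of "n-1" "{j. j < n \<and> cof i j \<in> F}"] card_F'[of F n i] F i n by auto
      qed
      show "lifts_against n (U n F) E B f"
        using step[OF IH ext i n] F by blast
    qed
  qed
  then show ?case using less.prems by blast
qed

theorem mainTheorem3:
  fixes E :: "'a sset" and B :: "'b sset" and f :: "nat \<Rightarrow> 'a \<Rightarrow> 'b" and S :: "'c sset"
  shows "(is_sset E \<and> is_sset B \<and> smap E B f \<and> kan_fibration E B f \<longrightarrow> ss_fibration E B f)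
       \<and> (is_sset S \<and> kan_complex S \<longrightarrow> ss_complex S)"
proof -
  have gen: "ss_fibration X Y g" if "kan_fibration X Y g" for X :: "'x sset" and Y :: "'y sset" and g
    unfolding ss_fibration_def
  proof (intro allI impI)
    fix n p q :: nat assume a: "1 < n \<and> p < q \<and> q \<le> n"
    have "rhombus n p q = U n {p, q}" unfolding rhombus_def U_def by simp
    moreover have "lifts_against n (U n {p, q}) X Y g"
      using main[OF that, of "{p,q}" n] a by auto
    ultimately show "lifts_against n (rhombus n p q) X Y g" by simp
  qed
  show ?thesis unfolding kan_complex_def ss_complex_def using gen[of E B f] gen[of S terminal to_terminal] by blast
qed

end
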